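(* Let $n\ge4$, $\mathcal G\in\mathbb G^n_S$, and let $\mathcal A(\mathcal G_{cyclic})$ be the sum of the $n$ smallest edge weights of $\mathcal G_{cyclic}$ (counted among its $\binom n2$ edges). Then every Hamiltonian circuit of $\mathcal G$ has length at least $T(\mathcal G)+\mathcal A(\mathcal G_{cyclic})$, and the shortest Hamiltonian circuit of $\mathcal G$ has length at most $T(\mathcal G)$.
   Context: $\mathbb G^n_S$ is the space of complete undirected weighted graphs without loops on $V_1,\dots,V_n$ with edge weights $d_{i,j}=d_{j,i}$, identified with $\mathbb R^{\binom n2}$ with the standard inner product. $\mathcal G_{cyclic}$ is the orthogonal projection of $\mathcal G$ onto the orthogonal complement of the subspace of graphs with $d_{j,k}=\omega_j+\omega_k$ for some reals $\omega_j$. $S_S(V_j)=\sum_{k\ne j}d_{j,k}$, $T(\mathcal G)=\frac1{n-1}\sum_jS_S(V_j)$. A Hamiltonian circuit is a closed path visiting every vertex exactly once; its length is the sum of its edge weights. *)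

theory Defs
  imports Complex_Main "HOL-Combinatorics.Permutations"
begin

text \<open>Vertices V_1..V_n are represented by 0..<n; a weighted graph by a symmetric
  function d :: nat => nat => real (only the values d i j with i \<noteq> j, i,j < n matter).\<close>

definition edges :: "nat \<Rightarrow> (nat \<times> nat) list" where
  "edges n = concat (map (\<lambda>i. map (\<lambda>j. (i, j)) [Suc i..<n]) [0..<n])"

definition ginner :: "nat \<Rightarrow> (nat \<Rightarrow> nat \<Rightarrow> real) \<Rightarrow> (nat \<Rightarrow> nat \<Rightarrow> real) \<Rightarrow> real" where
  "ginner n a b = (\<Sum>i<n. \<Sum>j\<in>{Suc i..<n}. a i j * b i j)"

text \<open>Canonical representative of an element of G^n_S: symmetric, zero off the edge set.\<close>
definition graph_rep :: "nat \<Rightarrow> (nat \<Rightarrow> nat \<Rightarrow> real) \<Rightarrow> bool" where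
  "graph_rep n c \<longleftrightarrow> (\<forall>i j. c i j = c j i) \<and> (\<forall>i j. (n \<le> i \<or> n \<le> j \<or> i = j) \<longrightarrow> c i j = 0)"

definition cut_space :: "nat \<Rightarrow> (nat \<Rightarrow> nat \<Rightarrow> real) set" where
  "cut_space n = {w. \<exists>\<omega>::nat \<Rightarrow> real. \<forall>i<n. \<forall>j<n. i \<noteq> j \<longrightarrow> w i j = \<omega> i + \<omega> j}"

text \<open>G_cyclic: orthogonal projection of d onto the orthogonal complement of cut_space,
  i.e. the unique c orthogonal to cut_space with d - c in cut_space.\<close>
definition G_cyclic :: "nat \<Rightarrow> (nat \<Rightarrow> nat \<Rightarrow> real) \<Rightarrow> (nat \<Rightarrow> nat \<Rightarrow> real)" where
  "G_cyclic n d = (THE c. graph_rep n c \<and> (\<forall>w\<in>cut_space n. ginner n c w = 0)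
                          \<and> (\<lambda>i j. d i j - c i j) \<in> cut_space n)"

definition S_S :: "nat \<Rightarrow> (nat \<Rightarrow> nat \<Rightarrow> real) \<Rightarrow> nat \<Rightarrow> real" where
  "S_S n d j = (\<Sum>k\<in>{..<n} - {j}. d j k)"

definition T_G :: "nat \<Rightarrow> (nat \<Rightarrow> nat \<Rightarrow> real) \<Rightarrow> real" where
  "T_G n d = (\<Sum>j<n. S_S n d j) / (real n - 1)"

definition A_small :: "nat \<Rightarrow> (nat \<Rightarrow> nat \<Rightarrow> real) \<Rightarrow> real" where
  "A_small n c = sum_list (take n (sort (map (\<lambda>(i, j). c i j) (edges n))))"

definition circuit_length :: "nat \<Rightarrow> (nat \<Rightarrow> nat \<Rightarrow> real) \<Rightarrow> (nat \<Rightarrow> nat) \<Rightarrow> real" where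
  "circuit_length n d p = (\<Sum>i<n. d (p i) (p (Suc i mod n)))"

definition hamiltonian_circuits :: "nat \<Rightarrow> (nat \<Rightarrow> nat) set" where
  "hamiltonian_circuits n = {p. p permutes {..<n}}"

end

theory Submission
  imports Defs "HOL-Combinatorics.List_Permutation"
begin



lemma swap_tri: "(\<Sum>i<n. \<Sum>j\<in>{Suc i..<n}. g i j) = (\<Sum>j<n. \<Sum>i<j. (g i j::real))"
proof (induction n)
  case 0 then show ?case by simp
next
  case (Suc n)
  have "(\<Sum>i<Suc n. \<Sum>j\<in>{Suc i..<Suc n}. g i j) = (\<Sum>i<n. \<Sum>j\<in>{Suc i..<Suc n}. g i j)"
    by simp
  also have "\<dots> = (\<Sum>i<n. (\<Sum>j\<in>{Suc i..<n}. g i j) + g i n)"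
    by (rule sum.cong) auto
  also have "\<dots> = (\<Sum>j<n. \<Sum>i<j. g i j) + (\<Sum>i<n. g i n)"
    by (simp add: sum.distrib Suc)
  finally show ?case by simp
qed

lemma split_row: "i < n \<Longrightarrow> (\<Sum>j\<in>{..<n}-{i}. f j) = (\<Sum>j<i. f j) + (\<Sum>j\<in>{Suc i..<n}. (f j::real))"
proof -
  assume "i < n"
  then have "{..<n}-{i} = {..<i} \<union> {Suc i..<n}" by auto
  moreover have "{..<i} \<inter> {Suc i..<n} = {}" by auto
  ultimately show ?thesis by (simp add: sum.union_disjoint)
qed

lemma rows:
  assumes "\<forall>i j. c i j = c j i"
  shows "(\<Sum>i<n. \<Sum>j\<in>{Suc i..<n}. c i j * (\<nu> i + \<nu> j)) = (\<Sum>i<n. \<nu> i * (\<Sum>j\<in>{..<n}-{i}. (c i j::real)))"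
proof -
  have "(\<Sum>i<n. \<Sum>j\<in>{Suc i..<n}. c i j * (\<nu> i + \<nu> j))
     = (\<Sum>i<n. \<Sum>j\<in>{Suc i..<n}. c i j * \<nu> i) + (\<Sum>i<n. \<Sum>j\<in>{Suc i..<n}. c i j * \<nu> j)"
    by (simp add: distrib_left sum.distrib)
  also have "(\<Sum>i<n. \<Sum>j\<in>{Suc i..<n}. c i j * \<nu> j) = (\<Sum>j<n. \<Sum>i<j. c i j * \<nu> j)"
    by (rule swap_tri)
  also have "\<dots> = (\<Sum>i<n. \<nu> i * (\<Sum>j<i. c i j))"
    by (simp add: sum_distrib_left assms mult.commute)
  also have "(\<Sum>i<n. \<Sum>j\<in>{Suc i..<n}. c i j * \<nu> i) = (\<Sum>i<n. \<nu> i * (\<Sum>j\<in>{Suc i..<n}. c i j))"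
    by (simp add: sum_distrib_left mult.commute)
  finally show ?thesis
    by (simp add: split_row sum.distrib[symmetric] distrib_left algebra_simps)
qed




lemma sorted_take_le:
  fixes xs :: "real list"
  assumes "sorted xs" "I \<subseteq> {..<length xs}" "card I = k"
  shows "sum_list (take k xs) \<le> (\<Sum>i\<in>I. xs ! i)"
proof (cases "k = 0")
  case True
  then have "I = {}" using assms(2,3) by (metis card_eq_0_iff finite_lessThan finite_subset)
  then show ?thesis using True by simp
next
  case False
  have fI: "finite I" using assms(2) finite_subset by blast
  have kl: "k \<le> length xs" using assms(2,3) by (metis card_lessThan card_mono finite_lessThan)
  define K where "K = {..<k}"
  define t where "t = xs ! (k - 1)"
  have st: "sum_list (take k xs) = (\<Sum>i\<in>K. xs ! i)"
    unfolding K_def using kl by (simp add: sum_list_sum_nth atLeast0LessThan)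
  have fK: "finite K" by (simp add: K_def)
  have cK: "card K = k" by (simp add: K_def)
  have c1: "card I = card (I \<inter> K) + card (I - K)" using fI by (simp add: card_Int_Diff)
  have c2: "card K = card (K \<inter> I) + card (K - I)" using fK by (simp add: card_Int_Diff)
  have ceq: "card (I - K) = card (K - I)" using c1 c2 cK assms(3) by (simp add: Int_commute)
  have s1: "(\<Sum>i\<in>I. xs ! i) = (\<Sum>i\<in>I \<inter> K. xs ! i) + (\<Sum>i\<in>I - K. xs ! i)"
    using fI by (simp add: sum.Int_Diff)
  have s2: "(\<Sum>i\<in>K. xs ! i) = (\<Sum>i\<in>K \<inter> I. xs ! i) + (\<Sum>i\<in>K - I. xs ! i)"
    using fK by (simp add: sum.Int_Diff)
  have lo: "(\<Sum>i\<in>I - K. xs ! i) \<ge> (\<Sum>i\<in>I - K. t)"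
  proof (rule sum_mono)
    fix i assume "i \<in> I - K"
    then have "k - 1 \<le> i" "i < length xs" using assms(2) by (auto simp: K_def)
    then show "t \<le> xs ! i" unfolding t_def using assms(1) by (simp add: sorted_nth_mono)
  qed
  have hi: "(\<Sum>i\<in>K - I. xs ! i) \<le> (\<Sum>i\<in>K - I. t)"
  proof (rule sum_mono)
    fix i assume "i \<in> K - I"
    then have "i \<le> k - 1" using False by (auto simp: K_def)
    then show "xs ! i \<le> t" unfolding t_def using assms(1) kl False by (simp add: sorted_nth_mono)
  qed
  have "(\<Sum>i\<in>I - K. t) = (\<Sum>i\<in>K - I. t)" using ceq by simp
  then show ?thesis using st s1 s2 lo hi ceq by (simp add: Int_commute)
qed

lemma take_sort_le:
  fixes xs :: "real list"
  assumes "I \<subseteq> {..<length xs}" "card I = k"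
  shows "sum_list (take k (sort xs)) \<le> (\<Sum>i\<in>I. xs ! i)"
proof -
  have "mset xs = mset (sort xs)" by simp
  then obtain f where f: "bij_betw f {..<length xs} {..<length (sort xs)}"
     "\<forall>i<length xs. xs ! i = sort xs ! (f i)"
    using permutation_Ex_bij by blast
  have inj: "inj_on f I" using f(1) assms(1) bij_betw_imp_inj_on inj_on_subset by blast
  have "(\<Sum>i\<in>I. xs ! i) = (\<Sum>i\<in>I. sort xs ! (f i))" using f(2) assms(1) by (auto intro: sum.cong)
  also have "\<dots> = (\<Sum>j\<in>f ` I. sort xs ! j)" using inj by (simp add: sum.reindex)
  finally have e: "(\<Sum>i\<in>I. xs ! i) = (\<Sum>j\<in>f ` I. sort xs ! j)" .
  have sub: "f ` I \<subseteq> {..<length (sort xs)}" using f(1) assms(1) bij_betw_imp_surj_on by blast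
  have "card (f ` I) = k" using inj assms(2) by (simp add: card_image)
  then show ?thesis using e sorted_take_le[OF sorted_sort sub] by simp
qed

lemma set_edges: "set (edges n) = {(i, j). i < j \<and> j < n}"
  unfolding edges_def by (auto simp: image_iff)

lemma distinct_edges: "distinct (edges n)"
proof -
  have inj: "inj_on (\<lambda>i. map (Pair i) [Suc i..<n]) {0..<n}"
  proof (rule inj_onI)
    fix i j assume i: "i \<in> {0..<n}" and j: "j \<in> {0..<n}"
      and e: "map (Pair i) [Suc i..<n] = map (Pair j) [Suc j..<n]"
    show "i = j"
    proof (rule ccontr)
      assume ne: "i \<noteq> j"
      show False
      proof (cases "Suc i < n")
        case True
        then have "hd (map (Pair i) [Suc i..<n]) = (i, Suc i)" by (simp add: upt_rec)
        moreover have "map (Pair j) [Suc j..<n] \<noteq> [] \<Longrightarrow> fst (hd (map (Pair j) [Suc j..<n])) = j"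
          by (cases "[Suc j..<n]") auto
        moreover have "map (Pair j) [Suc j..<n] \<noteq> []" using e True by auto
        ultimately show False using e ne True by auto
      next
        case False
        then have "i = n - 1" using i by auto
        moreover have "Suc j < n" using ne j \<open>i = n - 1\<close> by auto
        ultimately show False using e False by simp
      qed
    qed
  qed
  show ?thesis unfolding edges_def
    apply (rule distinct_concat)
    apply (simp add: distinct_map inj)
   apply (auto simp: inj_on_def distinct_map)
  done
qed




lemma sm: "i < n \<Longrightarrow> Suc i mod n = (if Suc i = n then 0 else Suc i)"
  by (simp add: mod_Suc)

lemma succ_ne_aux: "(i::nat) = (if Suc j = n then 0 else Suc j) \<Longrightarrow> j = (if Suc i = n then 0 else Suc i) \<Longrightarrow> 3 \<le> n \<Longrightarrow> False"
proof (cases "Suc j = n")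
  case True
  assume a: "i = (if Suc j = n then 0 else Suc j)" "j = (if Suc i = n then 0 else Suc i)" "3 \<le> n"
  then have "i = 0" using True by simp
  then have "j = 1" using a(2,3) by simp
  then show False using True a(3) by simp
next
  case False
  assume a: "i = (if Suc j = n then 0 else Suc j)" "j = (if Suc i = n then 0 else Suc i)" "3 \<le> n"
  then have i: "i = Suc j" using False by simp
  show False
  proof (cases "Suc i = n")
    case True then have "j = 0" using a(2) by simp
    then show False using True i a(3) by simp
  next
    case False then have "j = Suc i" using a(2) by simp
    then show False using i by simp
  qed
qed

lemma succ_ne: "n \<ge> 3 \<Longrightarrow> i < n \<Longrightarrow> j < n \<Longrightarrow> i = Suc j mod n \<Longrightarrow> j = Suc i mod n \<Longrightarrow> False"
proof -
  assume a: "n \<ge> 3" "i < n" "j < n" "i = Suc j mod n" "j = Suc i mod n"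
  have 1: "i = (if Suc j = n then 0 else Suc j)" using a(4) sm[OF a(3)] by (rule trans)
  have 2: "j = (if Suc i = n then 0 else Suc i)" using a(5) sm[OF a(2)] by (rule trans)
  show False by (rule succ_ne_aux[OF 1 2 a(1)])
qed

lemma minmax_eq: "min (a::nat) b = min c d \<Longrightarrow> max a b = max c d \<Longrightarrow> (a = c \<and> b = d) \<or> (a = d \<and> b = c)"
  by (auto simp: min_def max_def split: if_splits)

lemma minmax_edge: "(x::nat) \<noteq> y \<Longrightarrow> x < n \<Longrightarrow> y < n \<Longrightarrow> (min x y, max x y) \<in> set (edges n)"
  by (simp add: set_edges min_def max_def)

lemma circuit_ge_A:
  assumes n3: "n \<ge> 3" and g: "graph_rep n c" and p: "p permutes {..<n}"
  shows "A_small n c \<le> circuit_length n c p"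
proof -
  define s where "s i = Suc i mod n" for i
  define edge where "edge i = (min (p i) (p (s i)), max (p i) (p (s i)))" for i
  define f where "f = (\<lambda>(a::nat, b::nat). c a b)"
  define E where "E = edge ` {..<n}"
  have injp: "inj p" using p permutes_inj by blast
  have pin: "x < n \<Longrightarrow> p x < n" for x using permutes_in_image[OF p] by simp
  have sl: "i < n \<Longrightarrow> s i < n" for i using n3 by (simp add: s_def)
  have sne: "i < n \<Longrightarrow> s i \<noteq> i" for i
  proof -
    assume "i < n"
    then have "s i = (if Suc i = n then 0 else Suc i)" unfolding s_def by (rule sm)
    then show ?thesis using n3 by auto
  qed
  have csym: "c a b = c b a" for a b using g by (simp add: graph_rep_def)
  have fe: "f (edge i) = c (p i) (p (s i))" for i
  proof (cases "p i \<le> p (s i)")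
    case True
    then have "edge i = (p i, p (s i))" unfolding edge_def by simp
    then show ?thesis unfolding f_def by simp
  next
    case False
    then have "edge i = (p (s i), p i)" unfolding edge_def by simp
    then show ?thesis unfolding f_def using csym by simp
  qed
  have inj: "inj_on edge {..<n}"
  proof (rule inj_onI)
    fix i j assume i: "i \<in> {..<n}" and j: "j \<in> {..<n}" and e: "edge i = edge j"
    then have "(p i = p j \<and> p (s i) = p (s j)) \<or> (p i = p (s j) \<and> p (s i) = p j)"
      using minmax_eq[of "p i" "p (s i)" "p j" "p (s j)"] unfolding edge_def by simp
    then have "i = j \<or> (i = s j \<and> s i = j)" using injD[OF injp] by metis
    moreover have "\<not> (i = s j \<and> s i = j)"
    proof
      assume "i = s j \<and> s i = j"
      moreover have "s j = Suc j mod n" "s i = Suc i mod n" by (rule s_def)+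
      ultimately have "i = Suc j mod n" "j = Suc i mod n" by argo+
      then show False using succ_ne[OF n3, of i j] i j by blast
    qed
    ultimately show "i = j" by blast
  qed
  have cl: "circuit_length n c p = (\<Sum>e\<in>E. f e)"
  proof -
    have "circuit_length n c p = (\<Sum>i<n. c (p i) (p (s i)))" unfolding circuit_length_def s_def by simp
    also have "\<dots> = (\<Sum>i<n. f (edge i))" by (simp add: fe)
    also have "\<dots> = (\<Sum>e\<in>E. f e)" unfolding E_def using inj by (simp add: sum.reindex)
    finally show ?thesis .
  qed
  have Esub: "E \<subseteq> set (edges n)"
  proof
    fix e assume "e \<in> E"
    then obtain i where i: "i < n" "e = edge i" by (auto simp: E_def)
    have "p i \<noteq> p (s i)"
    proof
      assume "p i = p (s i)"
      then have "i = s i" by (rule injD[OF injp])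
      then show False using sne[OF i(1)] by simp
    qed
    then show "e \<in> set (edges n)" unfolding i(2) edge_def using i(1) pin sl by (intro minmax_edge) auto
  qed
  define J where "J = {j. j < length (edges n) \<and> edges n ! j \<in> E}"
  have bij: "bij_betw (nth (edges n)) J E"
  proof (rule bij_betw_imageI)
    show "inj_on (nth (edges n)) J" by (rule inj_on_nth[OF distinct_edges]) (simp add: J_def)
    show "nth (edges n) ` J = E"
    proof
      show "nth (edges n) ` J \<subseteq> E" unfolding J_def by blast
      show "E \<subseteq> nth (edges n) ` J"
      proof
        fix e assume eE: "e \<in> E"
        then obtain j where j: "j < length (edges n)" "edges n ! j = e"
        proof -
          have "e \<in> set (edges n)" using Esub eE by blast
          then show ?thesis using that by (auto simp: in_set_conv_nth)
        qed
        show "e \<in> nth (edges n) ` J" unfolding J_def using j eE by (intro image_eqI[of _ _ j]) auto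
      qed
    qed
  qed
  have "(\<Sum>e\<in>E. f e) = (\<Sum>j\<in>J. f (edges n ! j))"
    using bij by (simp add: sum.reindex_bij_betw)
  also have "\<dots> = (\<Sum>j\<in>J. map f (edges n) ! j)" by (auto simp: J_def intro: sum.cong)
  finally have eq: "circuit_length n c p = (\<Sum>j\<in>J. map f (edges n) ! j)" using cl by simp
  have "card J = n" using bij_betw_same_card[OF bij] inj by (simp add: E_def card_image)
  moreover have "J \<subseteq> {..<length (map f (edges n))}" by (auto simp: J_def)
  ultimately have "sum_list (take n (sort (map f (edges n)))) \<le> (\<Sum>j\<in>J. map f (edges n) ! j)"
    by (intro take_sort_le)
  then show ?thesis unfolding A_small_def eq f_def .
qed




lemma shift_sum: "0 < n \<Longrightarrow> (\<Sum>i<n. g (Suc i mod n)) = (\<Sum>i<n. (g i :: real))"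
proof -
  assume "0 < n"
  then obtain m where m: "n = Suc m" by (cases n) auto
  have "(\<Sum>i<Suc m. g (Suc i mod Suc m)) = (\<Sum>i<m. g (Suc i mod Suc m)) + g (Suc m mod Suc m)"
    by simp
  also have "(\<Sum>i<m. g (Suc i mod Suc m)) = (\<Sum>i<m. g (Suc i))"
    by (rule sum.cong) auto
  also have "(\<Sum>i<m. g (Suc i)) + g (Suc m mod Suc m) = (\<Sum>i<Suc m. g i)"
    by (subst sum.lessThan_Suc_shift) (simp add: add.commute)
  finally show ?thesis using m by simp
qed

lemma perm_row:
  fixes n :: nat
  assumes p: "p permutes {..<n}" and a: "a < n"
    and row: "\<forall>x<n. (\<Sum>y\<in>{..<n}-{x}. c x y) = (0::real)"
  shows "(\<Sum>b\<in>{..<n}-{a}. c (p a) (p b)) = 0"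
proof -
  have injp: "inj p" using p permutes_inj by blast
  have "(\<Sum>b\<in>{..<n}-{a}. c (p a) (p b)) = (\<Sum>y\<in>p ` ({..<n}-{a}). c (p a) y)"
    using injp by (simp add: sum.reindex inj_on_subset[OF injp])
  also have "p ` ({..<n}-{a}) = {..<n} - {p a}"
    using image_set_diff[OF injp] permutes_image[OF p] by simp
  also have "p a < n" using permutes_in_image[OF p] a by simp
  then have "(\<Sum>y\<in>{..<n} - {p a}. c (p a) y) = 0" using row by simp
  finally show ?thesis .
qed

lemma avg_pair:
  fixes n :: nat
  assumes a: "a < n" and b: "b < n" and ab: "a \<noteq> b"
    and row: "\<forall>x<n. (\<Sum>y\<in>{..<n}-{x}. c x y) = (0::real)"
  shows "(\<Sum>p\<in>{p. p permutes {..<n}}. c (p a) (p b)) = 0"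
proof -
  define F where "F b' = (\<Sum>p\<in>{p. p permutes {..<n}}. c (p a) (p b'))" for b'
  have eqF: "F b' = F b" if b': "b' \<in> {..<n}-{a}" for b'
  proof -
    have ta: "transpose b b' a = a" using ab b' by (intro transpose_apply_other) auto
    have tp: "transpose b b' permutes {..<n}" using b b' by (intro permutes_swap_id) auto
    have "F b = (\<Sum>p\<in>{p. p permutes {..<n}}. c ((p \<circ> transpose b b') a) ((p \<circ> transpose b b') b))"
      unfolding F_def by (rule sum_permutations_compose_right[OF tp])
    also have "\<dots> = F b'" unfolding F_def using ta by simp
    finally show ?thesis by simp
  qed
  have "(\<Sum>b'\<in>{..<n}-{a}. F b') = (\<Sum>p\<in>{p. p permutes {..<n}}. \<Sum>b'\<in>{..<n}-{a}. c (p a) (p b'))"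
    unfolding F_def by (rule sum.swap)
  also have "\<dots> = 0" using perm_row[OF _ a row] by simp
  finally have "(\<Sum>b'\<in>{..<n}-{a}. F b) = 0" using eqF by simp
  then have "real (card ({..<n}-{a})) * F b = 0" by simp
  moreover have "b \<in> {..<n}-{a}" using b ab by auto
  then have "card ({..<n}-{a}) > 0" by (auto simp: card_gt_0_iff)
  then have "real (card ({..<n}-{a})) \<noteq> 0" by linarith
  ultimately have "F b = 0" using mult_eq_0_iff by blast
  then show ?thesis unfolding F_def .
qed

lemma avg_circuit:
  assumes n: "n \<ge> 3"
    and row: "\<forall>x<n. (\<Sum>y\<in>{..<n}-{x}. c x y) = (0::real)"
  shows "(\<Sum>p\<in>{p. p permutes {..<n}}. circuit_length n c p) = 0"
proof -
  have "(\<Sum>p\<in>{p. p permutes {..<n}}. circuit_length n c p)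
      = (\<Sum>i<n. \<Sum>p\<in>{p. p permutes {..<n}}. c (p i) (p (Suc i mod n)))"
    unfolding circuit_length_def by (rule sum.swap)
  also have "\<dots> = 0"
  proof (rule sum.neutral, rule ballI)
    fix i assume i: "i \<in> {..<n}"
    have "Suc i mod n \<noteq> i" using sm[of i n] i n by auto
    moreover have "Suc i mod n < n" using n by simp
    ultimately show "(\<Sum>p\<in>{p. p permutes {..<n}}. c (p i) (p (Suc i mod n))) = 0"
      using avg_pair[OF _ _ _ row] i by simp
  qed
  finally show ?thesis .
qed




definition Pc :: "nat \<Rightarrow> (nat \<Rightarrow> nat \<Rightarrow> real) \<Rightarrow> (nat \<Rightarrow> nat \<Rightarrow> real) \<Rightarrow> bool" where
  "Pc n d c \<longleftrightarrow> graph_rep n c \<and> (\<forall>w\<in>cut_space n. ginner n c w = 0) \<and> (\<lambda>i j. d i j - c i j) \<in> cut_space n"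

lemma ginner_cut:
  assumes "\<forall>i j. c i j = c j i" "\<forall>i<n. \<forall>j<n. i \<noteq> j \<longrightarrow> w i j = \<nu> i + \<nu> j"
  shows "ginner n c w = (\<Sum>i<n. \<nu> i * (\<Sum>j\<in>{..<n}-{i}. c i j))"
proof -
  have "ginner n c w = (\<Sum>i<n. \<Sum>j\<in>{Suc i..<n}. c i j * (\<nu> i + \<nu> j))"
    unfolding ginner_def using assms(2) by (intro sum.cong refl) auto
  also have "\<dots> = (\<Sum>i<n. \<nu> i * (\<Sum>j\<in>{..<n}-{i}. c i j))" by (rule rows[OF assms(1)])
  finally show ?thesis .
qed

lemma row_zero:
  assumes g: "graph_rep n c" and o: "\<forall>w\<in>cut_space n. ginner n c w = 0"
  shows "\<forall>x<n. (\<Sum>y\<in>{..<n}-{x}. c x y) = 0"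
proof (intro allI impI)
  fix x assume x: "x < n"
  define \<nu> where "\<nu> i = (if i = x then 1 else (0::real))" for i
  define w where "w i j = \<nu> i + \<nu> j" for i j
  have "w \<in> cut_space n" unfolding cut_space_def w_def by blast
  then have "0 = ginner n c w" using o by simp
  also have "\<dots> = (\<Sum>i<n. \<nu> i * (\<Sum>j\<in>{..<n}-{i}. c i j))"
    using g by (intro ginner_cut) (auto simp: graph_rep_def w_def)
  also have "\<dots> = (\<Sum>i<n. if i = x then (\<Sum>j\<in>{..<n}-{i}. c i j) else 0)"
    by (intro sum.cong) (auto simp: \<nu>_def)
  also have "\<dots> = (\<Sum>y\<in>{..<n}-{x}. c x y)" using x by simp
  finally show "(\<Sum>y\<in>{..<n}-{x}. c x y) = 0" by simp
qed

lemma existence: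
  assumes n: "n \<ge> 3" and dsym: "\<forall>i j. d i j = d j i"
  shows "\<exists>c. Pc n d c"
proof -
  define R where "R j = S_S n d j" for j
  define T where "T = T_G n d"
  define \<omega> where "\<omega> j = (R j - T / 2) / (real n - 2)" for j
  define c where "c i j = (if i < n \<and> j < n \<and> i \<noteq> j then d i j - \<omega> i - \<omega> j else 0)" for i j
  have n2: "real n - 2 > 0" "real n - 1 > 0" using n by auto
  have sumR: "(\<Sum>j<n. R j) = (real n - 1) * T"
    unfolding T_def T_G_def R_def using n2 by simp
  define \<Omega> where "\<Omega> = (\<Sum>k<n. \<omega> k)"
  have "\<Omega> = ((\<Sum>j<n. R j) - real n * (T / 2)) / (real n - 2)"
    unfolding \<Omega>_def \<omega>_def by (simp add: sum_divide_distrib[symmetric] sum_subtractf)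
  also have "\<dots> = T / 2" using n2 sumR by (simp add: field_simps)
  finally have Om: "\<Omega> = T / 2" .
  have rowc: "(\<Sum>k\<in>{..<n}-{j}. c j k) = 0" if j: "j < n" for j
  proof -
    have "(\<Sum>k\<in>{..<n}-{j}. c j k) = (\<Sum>k\<in>{..<n}-{j}. d j k - \<omega> j - \<omega> k)"
      unfolding c_def using j by (intro sum.cong) auto
    also have "\<dots> = R j - real (n - 1) * \<omega> j - (\<Omega> - \<omega> j)"
      using j by (simp add: sum_subtractf R_def S_S_def \<Omega>_def sum_diff1)
    also have "\<dots> = R j - (real n - 2) * \<omega> j - \<Omega>"
      using n by (simp add: of_nat_diff algebra_simps)
    also have "(real n - 2) * \<omega> j = R j - T / 2" unfolding \<omega>_def using n2 by simp
    also have "R j - (R j - T / 2) - \<Omega> = 0" using Om by simp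
    finally show ?thesis .
  qed
  have gr: "graph_rep n c" unfolding graph_rep_def c_def using dsym by auto
  have orth: "\<forall>w\<in>cut_space n. ginner n c w = 0"
  proof
    fix w assume "w \<in> cut_space n"
    then obtain \<nu> where \<nu>: "\<forall>i<n. \<forall>j<n. i \<noteq> j \<longrightarrow> w i j = \<nu> i + \<nu> j"
      unfolding cut_space_def by blast
    have "ginner n c w = (\<Sum>i<n. \<nu> i * (\<Sum>j\<in>{..<n}-{i}. c i j))"
      using gr \<nu> by (intro ginner_cut) (auto simp: graph_rep_def)
    also have "\<dots> = 0" using rowc by simp
    finally show "ginner n c w = 0" .
  qed
  have cut: "(\<lambda>i j. d i j - c i j) \<in> cut_space n"
    unfolding cut_space_def c_def by auto
  show ?thesis using gr orth cut unfolding Pc_def by blast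
qed

lemma uniqueness:
  assumes P1: "Pc n d c1" and P2: "Pc n d c2"
  shows "c1 = c2"
proof -
  define e where "e i j = c1 i j - c2 i j" for i j
  obtain \<omega>1 where w1: "\<forall>i<n. \<forall>j<n. i \<noteq> j \<longrightarrow> d i j - c1 i j = \<omega>1 i + \<omega>1 j"
    using P1 unfolding Pc_def cut_space_def by auto
  obtain \<omega>2 where w2: "\<forall>i<n. \<forall>j<n. i \<noteq> j \<longrightarrow> d i j - c2 i j = \<omega>2 i + \<omega>2 j"
    using P2 unfolding Pc_def cut_space_def by auto
  have "\<forall>i<n. \<forall>j<n. i \<noteq> j \<longrightarrow> e i j = (\<omega>2 i - \<omega>1 i) + (\<omega>2 j - \<omega>1 j)"
  proof (intro allI impI)
    fix i j assume ij: "i < n" "j < n" "i \<noteq> j"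
    have a: "d i j - c1 i j = \<omega>1 i + \<omega>1 j" using w1 ij by blast
    have b: "d i j - c2 i j = \<omega>2 i + \<omega>2 j" using w2 ij by blast
    show "e i j = (\<omega>2 i - \<omega>1 i) + (\<omega>2 j - \<omega>1 j)"
      unfolding e_def using a b by simp
  qed
  then have ecut: "e \<in> cut_space n" unfolding cut_space_def mem_Collect_eq
    by (intro exI[of _ "\<lambda>k. \<omega>2 k - \<omega>1 k"])
  have "ginner n e e = ginner n c1 e - ginner n c2 e"
    unfolding ginner_def e_def by (simp add: left_diff_distrib sum_subtractf)
  also have "\<dots> = 0" using P1 P2 ecut unfolding Pc_def by simp
  finally have "(\<Sum>i<n. \<Sum>j\<in>{Suc i..<n}. e i j * e i j) = 0" unfolding ginner_def .
  then have z: "\<forall>i\<in>{..<n}. (\<Sum>j\<in>{Suc i..<n}. e i j * e i j) = 0"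
    by (subst (asm) sum_nonneg_eq_0_iff) (auto intro: sum_nonneg)
  have zz: "e i j = 0" if "i < j" "j < n" for i j
  proof -
    have "(\<Sum>j\<in>{Suc i..<n}. e i j * e i j) = 0" using z that by simp
    then have "\<forall>j\<in>{Suc i..<n}. e i j * e i j = 0"
      by (subst (asm) sum_nonneg_eq_0_iff) auto
    then show ?thesis using that by simp
  qed
  have g1: "graph_rep n c1" and g2: "graph_rep n c2" using P1 P2 unfolding Pc_def by auto
  have "c1 i j = c2 i j" for i j
  proof (cases "n \<le> i \<or> n \<le> j \<or> i = j")
    case True
    have "c1 i j = 0" using g1 True unfolding graph_rep_def by blast
    moreover have "c2 i j = 0" using g2 True unfolding graph_rep_def by blast
    ultimately show ?thesis by simp
  next
    case False
    then have "i < j \<or> j < i" "i < n" "j < n" by auto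
    then show ?thesis
    proof (elim disjE)
      assume "i < j" then show ?thesis using zz[of i j] \<open>j < n\<close> unfolding e_def by simp
    next
      assume "j < i" then have "c1 j i = c2 j i" using zz[of j i] \<open>i < n\<close> unfolding e_def by simp
      moreover have "c1 i j = c1 j i" "c2 i j = c2 j i" using g1 g2 unfolding graph_rep_def by blast+
      ultimately show ?thesis by simp
    qed
  qed
  then show ?thesis by blast
qed

lemma G_cyclic_Pc:
  assumes n: "n \<ge> 3" and dsym: "\<forall>i j. d i j = d j i"
  shows "Pc n d (G_cyclic n d)"
proof -
  have ex1: "\<exists>!c. Pc n d c" proof -
    obtain c where "Pc n d c" using existence[OF n dsym] by blast
    then show ?thesis by (intro ex1I[of _ c]) (auto intro: uniqueness)
  qed
  have "G_cyclic n d = (THE c. Pc n d c)" unfolding G_cyclic_def Pc_def by simp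
  then show ?thesis using theI'[OF ex1] by simp
qed




theorem corollary7:
  fixes n :: nat and d :: "nat \<Rightarrow> nat \<Rightarrow> real"
  assumes "n \<ge> 4"
    and "\<forall>i j. d i j = d j i"
  shows "(\<forall>p\<in>hamiltonian_circuits n.
            circuit_length n d p \<ge> T_G n d + A_small n (G_cyclic n d))
       \<and> Min (circuit_length n d ` hamiltonian_circuits n) \<le> T_G n d"
proof -
  have n: "n \<ge> 3" using assms(1) by simp
  define c where "c = G_cyclic n d"
  have P: "Pc n d c" unfolding c_def by (rule G_cyclic_Pc[OF n assms(2)])
  have g: "graph_rep n c" using P unfolding Pc_def by blast
  have row: "\<forall>x<n. (\<Sum>y\<in>{..<n}-{x}. c x y) = 0"
    using P unfolding Pc_def by (intro row_zero) auto
  obtain \<omega> where w: "\<forall>i<n. \<forall>j<n. i \<noteq> j \<longrightarrow> d i j - c i j = \<omega> i + \<omega> j"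
    using P unfolding Pc_def cut_space_def by auto
  define \<Omega> where "\<Omega> = (\<Sum>k<n. \<omega> k)"
  have n2: "real n - 1 > 0" using n by simp
  have SS: "S_S n d j = (real n - 2) * \<omega> j + \<Omega>" if j: "j < n" for j
  proof -
    have "S_S n d j = (\<Sum>k\<in>{..<n}-{j}. c j k + \<omega> j + \<omega> k)"
      unfolding S_S_def
    proof (rule sum.cong[OF refl])
      fix k assume "k \<in> {..<n}-{j}"
      then have "k < n" "j \<noteq> k" by auto
      then have "d j k - c j k = \<omega> j + \<omega> k" using w j by blast
      then show "d j k = c j k + \<omega> j + \<omega> k" by simp
    qed
    also have "\<dots> = (\<Sum>k\<in>{..<n}-{j}. c j k) + real (n - 1) * \<omega> j + (\<Omega> - \<omega> j)"
      using j by (simp add: sum.distrib \<Omega>_def sum_diff1)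
    also have "\<dots> = (real n - 2) * \<omega> j + \<Omega>"
      using row j n by (simp add: of_nat_diff algebra_simps)
    finally show ?thesis .
  qed
  have T: "T_G n d = 2 * \<Omega>"
  proof -
    have "(\<Sum>j<n. S_S n d j) = (\<Sum>j<n. (real n - 2) * \<omega> j + \<Omega>)" using SS by simp
    also have "\<dots> = (real n - 2) * \<Omega> + real n * \<Omega>"
      by (simp add: sum.distrib sum_distrib_left[symmetric] \<Omega>_def)
    also have "\<dots> = (real n - 1) * (2 * \<Omega>)" by (simp add: algebra_simps)
    finally show ?thesis unfolding T_G_def using n2 by simp
  qed
  have circ: "circuit_length n d p = circuit_length n c p + 2 * \<Omega>"
    if p: "p permutes {..<n}" for p
  proof -
    have injp: "inj p" using p permutes_inj by blast
    have pin: "x < n \<Longrightarrow> p x < n" for x using permutes_in_image[OF p] by simp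
    have "circuit_length n d p = (\<Sum>i<n. c (p i) (p (Suc i mod n)) + (\<omega> (p i) + \<omega> (p (Suc i mod n))))"
      unfolding circuit_length_def
    proof (rule sum.cong[OF refl])
      fix i assume i: "i \<in> {..<n}"
      have "Suc i mod n \<noteq> i" using sm[of i n] i n by auto
      then have ne: "p i \<noteq> p (Suc i mod n)" using injp by (auto dest: injD)
      have "Suc i mod n < n" using n by simp
      then have "d (p i) (p (Suc i mod n)) - c (p i) (p (Suc i mod n)) = \<omega> (p i) + \<omega> (p (Suc i mod n))"
        using w ne pin i by simp
      then show "d (p i) (p (Suc i mod n)) = c (p i) (p (Suc i mod n)) + (\<omega> (p i) + \<omega> (p (Suc i mod n)))"
        by simp
    qed
    also have "\<dots> = circuit_length n c p + ((\<Sum>i<n. \<omega> (p i)) + (\<Sum>i<n. \<omega> (p (Suc i mod n))))"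
      unfolding circuit_length_def by (simp add: sum.distrib)
    also have "(\<Sum>i<n. \<omega> (p (Suc i mod n))) = (\<Sum>i<n. \<omega> (p i))"
      using n by (intro shift_sum[of n "\<lambda>i. \<omega> (p i)"]) simp
    also have "(\<Sum>i<n. \<omega> (p i)) = \<Omega>"
      unfolding \<Omega>_def using sum.permute[OF p, of \<omega>] by (simp add: comp_def)
    finally show ?thesis by simp
  qed
  have part1: "\<forall>p\<in>hamiltonian_circuits n. circuit_length n d p \<ge> T_G n d + A_small n c"
  proof
    fix p assume "p \<in> hamiltonian_circuits n"
    then have p: "p permutes {..<n}" by (simp add: hamiltonian_circuits_def)
    show "circuit_length n d p \<ge> T_G n d + A_small n c"
      using circ[OF p] circuit_ge_A[OF n g p] T by simp
  qed
  define H where "H = hamiltonian_circuits n"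
  have fH: "finite H" unfolding H_def hamiltonian_circuits_def by (simp add: finite_permutations)
  have sum0: "(\<Sum>p\<in>H. circuit_length n c p) = 0"
    unfolding H_def hamiltonian_circuits_def by (rule avg_circuit[OF n row])
  have H_ne: "id \<in> H" unfolding H_def hamiltonian_circuits_def by (simp add: permutes_id)
  obtain p where pH: "p \<in> H" and pl: "circuit_length n c p \<le> 0"
  proof (rule ccontr)
    assume "\<not> thesis"
    then have "\<forall>p\<in>H. circuit_length n c p > 0" using that by force
    then have "(\<Sum>p\<in>H. circuit_length n c p) > 0" using fH H_ne by (intro sum_pos) auto
    then show False using sum0 by simp
  qed
  have "Min (circuit_length n d ` H) \<le> circuit_length n d p"
    using fH pH by (intro Min_le) auto
  also have "\<dots> \<le> T_G n d"
    using circ pH pl T unfolding H_def hamiltonian_circuits_def by simp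
  finally have part2: "Min (circuit_length n d ` hamiltonian_circuits n) \<le> T_G n d" unfolding H_def .
  show ?thesis using part1 part2 unfolding c_def by blast
qed


end
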